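(* Let $X=\{1,\dots,n\}$, let $\phi:X\leadsto X$ be a set-valued map which is a surjection (every $j\in X$ belongs to $\phi(i)$ for some $i$), let $T\in\mathbb{N}$ and $I=\{0,1,\dots,T\}$. Let $g:X\to\mathbb{R}$ and $g_0=B_1^T(g)$. Let $U:I\times X\to\mathbb{R}$ be given by $U(k,x_k)=\min\{g_0(x(0))\mid x\in S_\phi(k,x_k)\}$, set $g_T=U(T,\cdot)$, and let $W:I\times X\to\mathbb{R}$ be given by $W(k,x_k)=\max\{g_T(x(T))\mid x\in S_\phi(k,x_k)\}$. Then $U(0,\cdot)=W(0,\cdot)$.
   Context: A trajectory is a map $x:I\to X$ with $x(i+1)\in\phi(x(i))$ for $i=0,\dots,T-1$; $S_\phi(k,x_k)$ is the set of trajectories with $x(k)=x_k$. For $h:X\to\mathbb{R}$, the backward one-step operator is $B_1(h)(i)=\max\{h(j)\mid j\in\phi(i)\}$, and $B_1^T$ is its $T$-fold iterate. *)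

theory Defs
  imports "HOL-Library.FuncSet" Complex_Main
begin

definition trajectories :: "nat \<Rightarrow> (nat \<Rightarrow> nat set) \<Rightarrow> nat \<Rightarrow> (nat \<Rightarrow> nat) set" where
  "trajectories n phi T =
     {x \<in> {0..T} \<rightarrow>\<^sub>E {1..n}. \<forall>i<T. x (Suc i) \<in> phi (x i)}"

definition S_phi :: "nat \<Rightarrow> (nat \<Rightarrow> nat set) \<Rightarrow> nat \<Rightarrow> nat \<Rightarrow> nat \<Rightarrow> (nat \<Rightarrow> nat) set" where
  "S_phi n phi T k xk = {x \<in> trajectories n phi T. x k = xk}"

definition B1 :: "(nat \<Rightarrow> nat set) \<Rightarrow> (nat \<Rightarrow> real) \<Rightarrow> nat \<Rightarrow> real" where
  "B1 phi h i = Max (h ` phi i)"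

end

theory Submission
  imports Defs
begin

lemma traj_mem:
  assumes "z \<in> trajectories n phi T" "k \<le> T"
  shows "z k \<in> {1..n}"
  using assms unfolding trajectories_def PiE_def Pi_def by auto

lemma traj_step:
  assumes "z \<in> trajectories n phi T" "k < T"
  shows "z (Suc k) \<in> phi (z k)"
  using assms unfolding trajectories_def by auto

lemma L1:
  assumes phi_into: "\<forall>i\<in>{1..n}. phi i \<subseteq> {1..n}"
    and z: "z \<in> trajectories n phi T"
  shows "d \<le> T \<Longrightarrow> g (z T) \<le> (B1 phi ^^ d) g (z (T - d))"
proof (induction d)
  case 0
  then show ?case by simp
next
  case (Suc d)
  define i where "i = z (T - Suc d)"
  have iX: "i \<in> {1..n}" unfolding i_def using traj_mem[OF z] by simp
  have eq: "Suc (T - Suc d) = T - d" using Suc.prems by simp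
  have j: "z (T - d) \<in> phi i" unfolding i_def using traj_step[OF z, of "T - Suc d"] Suc.prems eq by simp
  have fin: "finite (phi i)" using phi_into iX by (meson finite_atLeastAtMost finite_subset)
  have "g (z T) \<le> (B1 phi ^^ d) g (z (T - d))" using Suc by simp
  also have "\<dots> \<le> Max ((B1 phi ^^ d) g ` phi i)" using fin j by simp
  also have "\<dots> = (B1 phi ^^ Suc d) g i" by (simp add: B1_def)
  finally show ?case unfolding i_def .
qed

lemma L2:
  assumes phi_into: "\<forall>i\<in>{1..n}. phi i \<subseteq> {1..n}"
    and phi_nonempty: "\<forall>i\<in>{1..n}. phi i \<noteq> {}"
  shows "i \<in> {1..n} \<Longrightarrow> \<exists>y. y 0 = i \<and> (\<forall>j\<le>m. y j \<in> {1..n}) \<and> (\<forall>j<m. y (Suc j) \<in> phi (y j))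
           \<and> (B1 phi ^^ m) g i = g (y m)"
proof (induction m arbitrary: i)
  case 0
  then show ?case by (intro exI[of _ "\<lambda>_. i"]) auto
next
  case (Suc m)
  have fin: "finite (phi i)" using phi_into Suc.prems by (meson finite_atLeastAtMost finite_subset)
  have ne: "phi i \<noteq> {}" using phi_nonempty Suc.prems by auto
  obtain j where j: "j \<in> phi i" "Max ((B1 phi ^^ m) g ` phi i) = (B1 phi ^^ m) g j"
  proof -
    have "Max ((B1 phi ^^ m) g ` phi i) \<in> (B1 phi ^^ m) g ` phi i"
      using fin ne by (intro Max_in) auto
    then show ?thesis using that by auto
  qed
  have jX: "j \<in> {1..n}" using j(1) phi_into Suc.prems by blast
  obtain y where y: "y 0 = j" "\<forall>j\<le>m. y j \<in> {1..n}" "\<forall>j<m. y (Suc j) \<in> phi (y j)"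
     "(B1 phi ^^ m) g j = g (y m)" using Suc.IH[OF jX] by blast
  define y' where "y' = (\<lambda>k. if k = 0 then i else y (k - 1))"
  have "y' 0 = i" by (simp add: y'_def)
  moreover have "\<forall>k\<le>Suc m. y' k \<in> {1..n}"
    using y(2) Suc.prems by (auto simp: y'_def)
  moreover have "\<forall>k<Suc m. y' (Suc k) \<in> phi (y' k)"
  proof (intro allI impI)
    fix k assume k: "k < Suc m"
    show "y' (Suc k) \<in> phi (y' k)"
    proof (cases k)
      case 0 then show ?thesis using y(1) j by (simp add: y'_def)
    next
      case (Suc k') then show ?thesis using y(3) k by (simp add: y'_def)
    qed
  qed
  moreover have "(B1 phi ^^ Suc m) g i = g (y' (Suc m))"
    using j y(4) by (simp add: B1_def y'_def)
  ultimately show ?case by blast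
qed

lemma S_fin: "finite (S_phi n phi T k xk)"
proof -
  have "S_phi n phi T k xk \<subseteq> PiE {0..T} (\<lambda>_. {1..n})"
    unfolding S_phi_def trajectories_def by auto
  then show ?thesis by (rule finite_subset) (simp add: finite_PiE)
qed

theorem proposition5p1:
  fixes n T :: nat and phi :: "nat \<Rightarrow> nat set" and g :: "nat \<Rightarrow> real"
    and g0 gT :: "nat \<Rightarrow> real" and U W :: "nat \<Rightarrow> nat \<Rightarrow> real"
  assumes phi_into: "\<forall>i\<in>{1..n}. phi i \<subseteq> {1..n}"
    and phi_nonempty: "\<forall>i\<in>{1..n}. phi i \<noteq> {}"
    and phi_surj: "\<forall>j\<in>{1..n}. \<exists>i\<in>{1..n}. j \<in> phi i"
    and g0_def: "g0 = (B1 phi ^^ T) g"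
    and U_def: "\<forall>k\<in>{0..T}. \<forall>xk\<in>{1..n}.
                  U k xk = Min ((\<lambda>x. g0 (x 0)) ` S_phi n phi T k xk)"
    and gT_def: "\<forall>xk\<in>{1..n}. gT xk = U T xk"
    and W_def: "\<forall>k\<in>{0..T}. \<forall>xk\<in>{1..n}.
                  W k xk = Max ((\<lambda>x. gT (x T)) ` S_phi n phi T k xk)"
  shows "\<forall>xk\<in>{1..n}. U 0 xk = W 0 xk"
proof
  fix x0 assume x0: "x0 \<in> {1..n}"
  obtain y where y: "y 0 = x0" "\<forall>j\<le>T. y j \<in> {1..n}" "\<forall>j<T. y (Suc j) \<in> phi (y j)"
     "g0 x0 = g (y T)" using L2[OF phi_into phi_nonempty x0, of T g] g0_def by blast
  define x where "x = (\<lambda>j. if j \<le> T then y j else undefined)"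
  have xS: "x \<in> S_phi n phi T 0 x0"
    using y unfolding S_phi_def trajectories_def x_def by (auto simp: PiE_def extensional_def)
  have low: "g (z T) \<le> g0 (z 0)" if "z \<in> trajectories n phi T" for z
    using L1[OF phi_into that, of T g] g0_def by simp
  have U0: "U 0 x0 = g0 x0"
  proof -
    have "(\<lambda>x. g0 (x 0)) ` S_phi n phi T 0 x0 = {g0 x0}"
      using xS by (auto simp: S_phi_def)
    then show ?thesis using U_def x0 by simp
  qed
  have gT_le: "gT (z T) \<le> g0 x0" if "z \<in> S_phi n phi T 0 x0" for z
  proof -
    have zt: "z \<in> trajectories n phi T" and z0: "z 0 = x0" using that by (auto simp: S_phi_def)
    have zT: "z T \<in> {1..n}" using traj_mem[OF zt] by simp
    have "z \<in> S_phi n phi T T (z T)" using zt by (simp add: S_phi_def)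
    then have "U T (z T) \<le> g0 (z 0)" using U_def zT S_fin by simp
    then show ?thesis using gT_def zT z0 by simp
  qed
  have W_le: "W 0 x0 \<le> g0 x0"
  proof -
    have "Max ((\<lambda>x. gT (x T)) ` S_phi n phi T 0 x0) \<le> g0 x0"
      using S_fin[of n phi T 0 x0] xS gT_le by (subst Max_le_iff) auto
    then show ?thesis using W_def x0 by simp
  qed
  have xt: "x \<in> trajectories n phi T" and xx: "x T = y T" using xS by (auto simp: S_phi_def x_def)
  have xT: "x T \<in> {1..n}" using traj_mem[OF xt] by simp
  have "g0 x0 \<le> gT (x T)"
  proof -
    have "g0 x0 \<le> Min ((\<lambda>z. g0 (z 0)) ` S_phi n phi T T (x T))"
    proof (subst Min_ge_iff)
      show "finite ((\<lambda>z. g0 (z 0)) ` S_phi n phi T T (x T))" using S_fin by simp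
      show "(\<lambda>z. g0 (z 0)) ` S_phi n phi T T (x T) \<noteq> {}" using xt by (auto simp: S_phi_def)
      show "\<forall>a\<in>(\<lambda>z. g0 (z 0)) ` S_phi n phi T T (x T). g0 x0 \<le> a"
        using low y(4) xx by (fastforce simp: S_phi_def)
    qed
    then show ?thesis using U_def gT_def xT by simp
  qed
  also have "\<dots> \<le> W 0 x0" using W_def x0 S_fin xS by simp
  finally show "U 0 x0 = W 0 x0" using U0 W_le by simp
qed

end
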